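(* In the public project problem with equal participation costs, there is no feasible Groves mechanism that welfare dominates the VCG mechanism.
   Context: Public project problem (equal participation costs): $n\ge2$ players, decisions $D=\{0,1\}$, $\Theta_i=[0,c]$ with $c>0$, $v_i(d,\theta_i)=d(\theta_i-c/n)$; efficient decision $f(\theta)=1$ iff $\sum_i\theta_i\ge c$. A Groves mechanism has taxes $t_i(\theta)=\sum_{j\ne i}v_j(f(\theta),\theta_j)+h_i(\theta_{-i})$ for arbitrary $h_i$; player $i$'s utility is $v_i(f(\theta),\theta_i)+t_i(\theta)$. The VCG (Clarke) mechanism uses $h_i(\theta_{-i})=-\max_{d\in D}\sum_{j\ne i}v_j(d,\theta_j)$. Feasible: $\sum_it_i(\theta)\le0$ for all $\theta$. $t'$ welfare dominates $t$ if $\sum_i t_i(\theta)\le\sum_i t'_i(\theta)$ for all $\theta$, strictly for some $\theta$. *)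

theory Defs
  imports Main "HOL.Real"
begin

text \<open>Players are 0,...,n-1. A type profile is a function theta :: nat => real,
  admissible if theta i is in [0,c] for every player i < n (values at indices >= n are irrelevant).\<close>

definition profiles :: "nat \<Rightarrow> real \<Rightarrow> (nat \<Rightarrow> real) set" where
  "profiles n c = {\<theta>. \<forall>i<n. \<theta> i \<in> {0..c}}"

definition val :: "nat \<Rightarrow> real \<Rightarrow> nat \<Rightarrow> real \<Rightarrow> real" where
  "val n c d t = real d * (t - c / real n)"

definition decisions :: "nat set" where
  "decisions = {0, 1}"

definition eff :: "nat \<Rightarrow> real \<Rightarrow> (nat \<Rightarrow> real) \<Rightarrow> nat" where
  "eff n c \<theta> = (if (\<Sum>i<n. \<theta> i) \<ge> c then 1 else 0)"

text \<open>h i theta is meant to depend only on theta_{-i}: this is enforced in the theorem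
  by the hypothesis depends_only_on_others.\<close>
definition depends_only_on_others :: "nat \<Rightarrow> real \<Rightarrow> (nat \<Rightarrow> (nat \<Rightarrow> real) \<Rightarrow> real) \<Rightarrow> bool" where
  "depends_only_on_others n c h \<longleftrightarrow>
     (\<forall>i<n. \<forall>\<theta>\<in>profiles n c. \<forall>\<theta>'\<in>profiles n c.
        (\<forall>j<n. j \<noteq> i \<longrightarrow> \<theta> j = \<theta>' j) \<longrightarrow> h i \<theta> = h i \<theta>')"

definition groves_tax :: "nat \<Rightarrow> real \<Rightarrow> (nat \<Rightarrow> (nat \<Rightarrow> real) \<Rightarrow> real) \<Rightarrow> nat \<Rightarrow> (nat \<Rightarrow> real) \<Rightarrow> real" where
  "groves_tax n c h i \<theta> = (\<Sum>j\<in>{..<n} - {i}. val n c (eff n c \<theta>) (\<theta> j)) + h i \<theta>"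

definition vcg_h :: "nat \<Rightarrow> real \<Rightarrow> nat \<Rightarrow> (nat \<Rightarrow> real) \<Rightarrow> real" where
  "vcg_h n c i \<theta> = - (MAX d\<in>decisions. (\<Sum>j\<in>{..<n} - {i}. val n c d (\<theta> j)))"

definition feasible :: "nat \<Rightarrow> real \<Rightarrow> (nat \<Rightarrow> (nat \<Rightarrow> real) \<Rightarrow> real) \<Rightarrow> bool" where
  "feasible n c t \<longleftrightarrow> (\<forall>\<theta>\<in>profiles n c. (\<Sum>i<n. t i \<theta>) \<le> 0)"

definition welfare_dominates :: "nat \<Rightarrow> real \<Rightarrow> (nat \<Rightarrow> (nat \<Rightarrow> real) \<Rightarrow> real) \<Rightarrow> (nat \<Rightarrow> (nat \<Rightarrow> real) \<Rightarrow> real) \<Rightarrow> bool" where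
  "welfare_dominates n c t' t \<longleftrightarrow>
     (\<forall>\<theta>\<in>profiles n c. (\<Sum>i<n. t i \<theta>) \<le> (\<Sum>i<n. t' i \<theta>)) \<and>
     (\<exists>\<theta>\<in>profiles n c. (\<Sum>i<n. t i \<theta>) < (\<Sum>i<n. t' i \<theta>))"

end

theory Submission
  imports Defs
begin

definition LOO :: "nat \<Rightarrow> (nat \<Rightarrow> real) \<Rightarrow> nat \<Rightarrow> real" where
  "LOO n \<theta> i = (\<Sum>j\<in>{..<n}-{i}. \<theta> j)"

definition mix :: "nat set \<Rightarrow> (nat \<Rightarrow> real) \<Rightarrow> (nat \<Rightarrow> real) \<Rightarrow> nat \<Rightarrow> real" where
  "mix S a b = (\<lambda>j. if j \<in> S then b j else a j)"

lemma mix_prof: "a \<in> profiles n c \<Longrightarrow> b \<in> profiles n c \<Longrightarrow> mix S a b \<in> profiles n c"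
  by (auto simp: profiles_def mix_def)

lemma two_elems: assumes "card (X::nat set) \<ge> 2" shows "\<exists>x y. x \<in> X \<and> y \<in> X \<and> x \<noteq> y"
proof -
  have f: "finite X" using assms card.infinite by fastforce
  then have "X \<noteq> {}" using assms by auto
  then obtain x where x: "x \<in> X" by auto
  have "card (X - {x}) \<ge> 1" using f x assms by (simp add: card_Diff_singleton)
  then obtain y where "y \<in> X - {x}"
    by (metis all_not_in_conv card.empty not_one_le_zero)
  then show ?thesis using x by auto
qed

lemma vcg_tax_i:
  assumes "i < n" "n \<ge> 1"
  shows "groves_tax n c (vcg_h n c) i m =
     (if (\<Sum>i<n. m i) \<ge> c then LOO n m i - (real n - 1) * c / real n else 0)
     - max 0 (LOO n m i - (real n - 1) * c / real n)"
proof -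
  have L: "(\<Sum>j\<in>{..<n}-{i}. val n c 1 (m j)) = LOO n m i - (real n - 1)*c/real n"
    using assms by (simp add: val_def sum_subtractf LOO_def card_Diff_singleton of_nat_diff)
  have Z: "(\<Sum>j\<in>{..<n}-{i}. val n c 0 (m j)) = 0" by (simp add: val_def)
  have V: "vcg_h n c i m = - max 0 (LOO n m i - (real n - 1)*c/real n)"
    unfolding vcg_h_def decisions_def using L Z by simp
  show ?thesis unfolding groves_tax_def V eff_def using L Z by simp
qed

lemma vcg_zero_hi:
  assumes "n \<ge> 1" "(\<Sum>i<n. m i) \<ge> c" "\<forall>i<n. LOO n m i \<ge> (real n - 1) * c / real n"
  shows "(\<Sum>i<n. groves_tax n c (vcg_h n c) i m) = 0"
  using assms by (intro sum.neutral) (auto simp: vcg_tax_i)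

lemma vcg_zero_lo:
  assumes "n \<ge> 1" "(\<Sum>i<n. m i) < c" "\<forall>i<n. LOO n m i \<le> (real n - 1) * c / real n"
  shows "(\<Sum>i<n. groves_tax n c (vcg_h n c) i m) = 0"
  using assms by (intro sum.neutral) (auto simp: vcg_tax_i)

lemma frac_le: assumes "n \<ge> 1" "c > 0" shows "(real n - 1) * c / real n \<le> c"
  using assms by (simp add: field_simps)

lemma mem_le_LOO: assumes "m \<in> profiles n c" "j < n" "j \<noteq> i" shows "m j \<le> LOO n m i"
  unfolding LOO_def
  by (rule member_le_sum) (use assms in \<open>auto simp: profiles_def\<close>)

lemma LOO_nonneg: assumes "m \<in> profiles n c" shows "LOO n m i \<ge> 0"
  unfolding LOO_def using assms by (intro sum_nonneg) (auto simp: profiles_def)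

lemma total_split: assumes "k < n" shows "(\<Sum>i<n. m i) = m k + LOO n m k"
  unfolding LOO_def using assms by (simp add: sum.remove)

lemma two_c:
  assumes "m \<in> profiles n c" "s1 < n" "s2 < n" "s1 \<noteq> s2" "m s1 = c" "m s2 = c" "c > 0"
  shows "(\<Sum>i<n. groves_tax n c (vcg_h n c) i m) = 0"
proof (rule vcg_zero_hi)
  show n1: "n \<ge> 1" using assms by auto
  show "(\<Sum>i<n. m i) \<ge> c" using total_split[OF assms(2), of m] LOO_nonneg[OF assms(1), of s1] assms by simp
  show "\<forall>i<n. LOO n m i \<ge> (real n - 1) * c / real n"
  proof (intro allI impI)
    fix i assume "i < n"
    obtain s where "s < n" "s \<noteq> i" "m s = c" using assms by metis
    then have "c \<le> LOO n m i" using mem_le_LOO[OF assms(1)] by metis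
    then show "LOO n m i \<ge> (real n - 1) * c / real n" using frac_le[OF n1 assms(7)] by linarith
  qed
qed

lemma box_identity:
  fixes d :: "nat \<Rightarrow> (nat \<Rightarrow> real) \<Rightarrow> real"
  assumes dep: "\<And>i \<theta> \<theta>'. i<n \<Longrightarrow> \<theta>\<in>profiles n c \<Longrightarrow> \<theta>'\<in>profiles n c \<Longrightarrow>
       (\<forall>j<n. j\<noteq>i \<longrightarrow> \<theta> j = \<theta>' j) \<Longrightarrow> d i \<theta> = d i \<theta>'"
    and a: "a\<in>profiles n c" and b: "b \<in> profiles n c"
  shows "(\<Sum>S\<in>Pow {..<n}. (-1)^card S * (\<Sum>i<n. d i (mix S a b))) = 0"
proof -
  have "(\<Sum>S\<in>Pow {..<n}. (-1)^card S * (\<Sum>i<n. d i (mix S a b)))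
      = (\<Sum>i<n. \<Sum>S\<in>Pow {..<n}. (-1)^card S * d i (mix S a b))"
    by (subst sum.swap) (simp add: sum_distrib_left)
  also have "\<dots> = 0"
  proof (rule sum.neutral, rule ballI)
    fix i assume i: "i \<in> {..<n}"
    define A where "A = {..<n} - {i}"
    define f where "f S = (-1)^card S * d i (mix S a b)" for S
    have fA: "finite A" by (simp add: A_def)
    have ins: "insert i A = {..<n}" using i by (auto simp: A_def)
    have P: "Pow {..<n} = Pow A \<union> insert i ` Pow A" by (simp add: ins[symmetric] Pow_insert)
    have disj: "Pow A \<inter> insert i ` Pow A = {}" by (auto simp: A_def)
    have inj: "inj_on (insert i) (Pow A)" unfolding inj_on_def A_def by blast
    have "(\<Sum>S\<in>Pow {..<n}. f S) = (\<Sum>S\<in>Pow A. f S) + (\<Sum>S\<in>Pow A. f (insert i S))"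
      by (simp add: P sum.union_disjoint disj sum.reindex inj fA)
    also have "\<dots> = (\<Sum>S\<in>Pow A. f S + f (insert i S))" by (simp add: sum.distrib)
    also have "\<dots> = 0"
    proof (rule sum.neutral, rule ballI)
      fix S assume S: "S \<in> Pow A"
      have iS: "i \<notin> S" and fS: "finite S" using S fA by (auto simp: A_def intro: finite_subset)
      have "d i (mix (insert i S) a b) = d i (mix S a b)"
        using i by (intro dep mix_prof a b) (auto simp: mix_def)
      then show "f S + f (insert i S) = 0" using iS fS by (simp add: f_def)
    qed
    finally show "(\<Sum>S\<in>Pow {..<n}. (-1)^card S * d i (mix S a b)) = 0" by (simp add: f_def)
  qed
  finally show ?thesis .
qed


theorem theorem3:
  fixes n :: nat and c :: real and h :: "nat \<Rightarrow> (nat \<Rightarrow> real) \<Rightarrow> real"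
  assumes "n \<ge> 2" and "c > 0"
    and "depends_only_on_others n c h"
    and "feasible n c (groves_tax n c h)"
  shows "\<not> welfare_dominates n c (groves_tax n c h) (groves_tax n c (vcg_h n c))"
proof
  assume wd: "welfare_dominates n c (groves_tax n c h) (groves_tax n c (vcg_h n c))"
  have n1: "n \<ge> 1" using assms(1) by simp
  define d where "d i \<theta> = h i \<theta> - vcg_h n c i \<theta>" for i \<theta>
  define D where "D \<theta> = (\<Sum>i<n. d i \<theta>)" for \<theta>
  have DTV: "D \<theta> = (\<Sum>i<n. groves_tax n c h i \<theta>) - (\<Sum>i<n. groves_tax n c (vcg_h n c) i \<theta>)" for \<theta>
    by (simp add: D_def d_def groves_tax_def sum_subtractf[symmetric])
  have nonneg: "D \<theta> \<ge> 0" if "\<theta> \<in> profiles n c" for \<theta>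
    using wd that unfolding welfare_dominates_def DTV by auto
  have bal: "D \<theta> \<le> 0" if "\<theta> \<in> profiles n c" "(\<Sum>i<n. groves_tax n c (vcg_h n c) i \<theta>) = 0" for \<theta>
    using assms(4) that unfolding feasible_def DTV by auto
  have dep: "d i \<theta> = d i \<theta>'" if "i<n" "\<theta>\<in>profiles n c" "\<theta>'\<in>profiles n c"
       "\<forall>j<n. j\<noteq>i \<longrightarrow> \<theta> j = \<theta>' j" for i \<theta> \<theta>'
  proof -
    have "h i \<theta> = h i \<theta>'" using assms(3) that unfolding depends_only_on_others_def by blast
    moreover have "\<forall>dd. (\<Sum>j\<in>{..<n}-{i}. val n c dd (\<theta> j)) = (\<Sum>j\<in>{..<n}-{i}. val n c dd (\<theta>' j))"
      using that(4) by (intro allI sum.cong) auto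
    ultimately show ?thesis by (simp add: d_def vcg_h_def)
  qed
  have keybox: "D a \<le> 0" if a: "a \<in> profiles n c" and b: "b \<in> profiles n c"
     and odd: "\<And>S. S \<subseteq> {..<n} \<Longrightarrow> odd (card S) \<Longrightarrow> D (mix S a b) \<le> 0" for a b
  proof -
    define f where "f S = (-1)^card S * D (mix S a b)" for S
    have id: "(\<Sum>S\<in>Pow {..<n}. f S) = 0"
      unfolding f_def D_def by (rule box_identity[OF dep a b]) auto
    have P: "Pow {..<n} = insert {} (Pow {..<n} - {{}})" by auto
    have "(\<Sum>S\<in>Pow {..<n}. f S) = f {} + (\<Sum>S\<in>Pow {..<n} - {{}}. f S)"
      by (rule sum.remove) auto
    moreover have "(\<Sum>S\<in>Pow {..<n} - {{}}. f S) \<ge> 0"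
    proof (rule sum_nonneg)
      fix S assume S: "S \<in> Pow {..<n} - {{}}"
      show "f S \<ge> 0"
      proof (cases "even (card S)")
        case True then show ?thesis using nonneg[OF mix_prof[OF a b]] by (simp add: f_def)
      next
        case False then show ?thesis using odd[of S] S by (simp add: f_def)
      qed
    qed
    moreover have "f {} = D a" by (simp add: f_def mix_def)
    ultimately show ?thesis using id by linarith
  qed
  have C12: "D a \<le> 0" if a: "a \<in> profiles n c" and k: "k < n" and ak: "a k = c" for a k
  proof (cases "LOO n a k \<ge> (real n - 1) * c / real n")
    case True
    have "(\<Sum>i<n. groves_tax n c (vcg_h n c) i a) = 0"
    proof (rule vcg_zero_hi[OF n1])
      show "(\<Sum>i<n. a i) \<ge> c" using total_split[OF k, of a] LOO_nonneg[OF a, of k] ak by simp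
      show "\<forall>i<n. LOO n a i \<ge> (real n - 1) * c / real n"
      proof (intro allI impI)
        fix i assume i: "i < n"
        show "LOO n a i \<ge> (real n - 1) * c / real n"
        proof (cases "i = k")
          case True then show ?thesis using \<open>LOO n a k \<ge> _\<close> by simp
        next
          case False
          then have "c \<le> LOO n a i" using mem_le_LOO[OF a k] ak by metis
          then show ?thesis using frac_le[OF n1 assms(2)] by linarith
        qed
      qed
    qed
    then show ?thesis using bal a by blast
  next
    case False
    define b where "b = (\<lambda>j. if j = k then 0 else c)"
    have b: "b \<in> profiles n c" using assms(2) by (auto simp: profiles_def b_def)
    show ?thesis
    proof (rule keybox[OF a b])
      fix S assume S: "S \<subseteq> {..<n}" and oS: "odd (card S)"
      define m where "m = mix S a b"
      have m: "m \<in> profiles n c" unfolding m_def by (rule mix_prof[OF a b])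
      have Sne: "S \<noteq> {}" using oS by auto
      show "D (mix S a b) \<le> 0"
      proof (cases "k \<in> S")
        case False
        obtain s where s: "s \<in> S" using Sne by auto
        have "s \<noteq> k" using s False by auto
        then have "(\<Sum>i<n. groves_tax n c (vcg_h n c) i m) = 0"
          using two_c[OF m, of s k] s S k ak False assms(2) by (auto simp: m_def mix_def b_def)
        then show ?thesis using bal m m_def by blast
      next
        case True
        show ?thesis
        proof (cases "S = {k}")
          case True
          have mk: "m k = 0" by (simp add: m_def mix_def b_def True)
          have mj: "m j = a j" if "j \<noteq> k" for j using that by (simp add: m_def mix_def True)
          have LL: "LOO n m k = LOO n a k" unfolding LOO_def by (rule sum.cong) (auto simp: mj)
          have tot: "(\<Sum>i<n. m i) = LOO n a k" using total_split[OF k, of m] mk LL by simp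
          have "(\<Sum>i<n. groves_tax n c (vcg_h n c) i m) = 0"
          proof (rule vcg_zero_lo[OF n1])
            show "(\<Sum>i<n. m i) < c" using tot False frac_le[OF n1 assms(2)] by linarith
            show "\<forall>i<n. LOO n m i \<le> (real n - 1) * c / real n"
            proof (intro allI impI)
              fix i assume i: "i < n"
              have "LOO n m i \<le> (\<Sum>i<n. m i)" unfolding LOO_def
                by (rule sum_mono2) (use m in \<open>auto simp: profiles_def\<close>)
              then show "LOO n m i \<le> (real n - 1) * c / real n" using tot False by linarith
            qed
          qed
          then show ?thesis using bal m m_def by blast
        next
          case False
          have fS: "finite S" using S finite_subset by blast
          have c1: "card (S - {k}) = card S - 1" using \<open>k \<in> S\<close> fS by simp
          obtain s where s: "s \<in> S" "s \<noteq> k" using False \<open>k \<in> S\<close> by blast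
          have sk: "s \<in> S - {k}" using s by blast
          have "finite (S - {k})" using fS by simp
          then have "card (S - {k}) \<noteq> 0" using sk by (simp add: card_eq_0_iff del: card_Diff_singleton_if) blast
          moreover have "even (card (S - {k}))"
          proof -
            have "card S \<noteq> 0" using \<open>k \<in> S\<close> fS by (simp add: card_eq_0_iff) blast
            then show ?thesis unfolding c1 using oS by presburger
          qed
          ultimately have "card (S - {k}) \<ge> 2" by presburger
          then obtain x y where xy: "x \<in> S - {k}" "y \<in> S - {k}" "x \<noteq> y" using two_elems by blast
          have "(\<Sum>i<n. groves_tax n c (vcg_h n c) i m) = 0"
            using two_c[OF m, of x y] xy S assms(2) by (auto simp: m_def mix_def b_def)
          then show ?thesis using bal m m_def by blast
        qed
      qed
    qed
  qed
  have all: "D a \<le> 0" if a: "a \<in> profiles n c" for a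
  proof -
    define b where "b = (\<lambda>j::nat. c)"
    have b: "b \<in> profiles n c" using assms(2) by (auto simp: profiles_def b_def)
    show ?thesis
    proof (rule keybox[OF a b])
      fix S assume S: "S \<subseteq> {..<n}" and oS: "odd (card S)"
      have m: "mix S a b \<in> profiles n c" by (rule mix_prof[OF a b])
      show "D (mix S a b) \<le> 0"
      proof (cases "card S = 1")
        case True
        then obtain k where "S = {k}" by (auto simp: card_1_singleton_iff)
        then show ?thesis using C12[OF m, of k] S by (simp add: mix_def b_def)
      next
        case False
        then have "card S \<ge> 2" using oS by presburger
        then obtain x y where xy: "x \<in> S" "y \<in> S" "x \<noteq> y" using two_elems by blast
        have "(\<Sum>i<n. groves_tax n c (vcg_h n c) i (mix S a b)) = 0"
          using two_c[OF m, of x y] xy S assms(2) by (auto simp: mix_def b_def)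
        then show ?thesis using bal m by blast
      qed
    qed
  qed
  from wd obtain \<theta> where "\<theta> \<in> profiles n c" "D \<theta> > 0"
    unfolding welfare_dominates_def DTV by auto
  then show False using all by fastforce
qed

end
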